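(* Let $G$ be a finite connected graph with chromatic number $\chi$ and let $c$ be a nice $\chi$-coloring of $G$. Then $h(c)\ge 2\chi-1$.
   Context: A proper $\chi$-coloring is a map $c:V(G)\to\{1,\dots,\chi\}$ with adjacent vertices receiving different colors; colors are considered modulo $\chi$. For such $c$, $D_c$ is the oriented graph on $V(G)$ with an arc $ab$ if and only if $\{a,b\}\in E(G)$ and $c(b)\equiv c(a)+1\pmod{\chi}$. The coloring $c$ is nice if $D_c$ is acyclic and has exactly one sink (vertex of out-degree $0$). For an acyclic oriented graph $D$, its level partition is the unique partition $(V_1,\dots,V_k)$ of $V(D)$ such that $V_i$ is the set of sinks of the subdigraph of $D$ induced on $V(D)\setminus(V_1\cup\dots\cup V_{i-1})$; $k$ is the height of the partition. The height $h(c)$ of a nice coloring $c$ is the height of the level partition of $D_c$, equivalently the number of vertices in a longest oriented path of $D_c$. *)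

theory Defs
  imports Main
begin

definition graph :: "'a set \<Rightarrow> ('a \<Rightarrow> 'a \<Rightarrow> bool) \<Rightarrow> bool" where
  "graph V E \<longleftrightarrow> finite V \<and> (\<forall>a b. E a b \<longrightarrow> a \<in> V \<and> b \<in> V)
     \<and> (\<forall>a b. E a b \<longrightarrow> E b a) \<and> (\<forall>a. \<not> E a a)"

definition connected_graph :: "'a set \<Rightarrow> ('a \<Rightarrow> 'a \<Rightarrow> bool) \<Rightarrow> bool" where
  "connected_graph V E \<longleftrightarrow> V \<noteq> {} \<and> (\<forall>a\<in>V. \<forall>b\<in>V. E\<^sup>*\<^sup>* a b)"

definition proper_coloring :: "'a set \<Rightarrow> ('a \<Rightarrow> 'a \<Rightarrow> bool) \<Rightarrow> nat \<Rightarrow> ('a \<Rightarrow> nat) \<Rightarrow> bool" where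
  "proper_coloring V E k c \<longleftrightarrow> (\<forall>v\<in>V. c v \<in> {1..k}) \<and> (\<forall>a b. E a b \<longrightarrow> c a \<noteq> c b)"

definition chromatic_number :: "'a set \<Rightarrow> ('a \<Rightarrow> 'a \<Rightarrow> bool) \<Rightarrow> nat" where
  "chromatic_number V E = (LEAST k. \<exists>c. proper_coloring V E k c)"

definition Dc_arc :: "('a \<Rightarrow> 'a \<Rightarrow> bool) \<Rightarrow> nat \<Rightarrow> ('a \<Rightarrow> nat) \<Rightarrow> 'a \<Rightarrow> 'a \<Rightarrow> bool" where
  "Dc_arc E k c a b \<longleftrightarrow> E a b \<and> c b mod k = (c a + 1) mod k"

definition Dc_acyclic :: "('a \<Rightarrow> 'a \<Rightarrow> bool) \<Rightarrow> nat \<Rightarrow> ('a \<Rightarrow> nat) \<Rightarrow> bool" where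
  "Dc_acyclic E k c \<longleftrightarrow> (\<forall>a. \<not> (Dc_arc E k c)\<^sup>+\<^sup>+ a a)"

definition Dc_sinks :: "'a set \<Rightarrow> ('a \<Rightarrow> 'a \<Rightarrow> bool) \<Rightarrow> nat \<Rightarrow> ('a \<Rightarrow> nat) \<Rightarrow> 'a set" where
  "Dc_sinks V E k c = {a \<in> V. \<not> (\<exists>b. Dc_arc E k c a b)}"

definition nice_coloring :: "'a set \<Rightarrow> ('a \<Rightarrow> 'a \<Rightarrow> bool) \<Rightarrow> nat \<Rightarrow> ('a \<Rightarrow> nat) \<Rightarrow> bool" where
  "nice_coloring V E k c \<longleftrightarrow> proper_coloring V E k c \<and> Dc_acyclic E k c
     \<and> card (Dc_sinks V E k c) = 1"

definition Dc_path :: "'a set \<Rightarrow> ('a \<Rightarrow> 'a \<Rightarrow> bool) \<Rightarrow> nat \<Rightarrow> ('a \<Rightarrow> nat) \<Rightarrow> 'a list \<Rightarrow> bool" where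
  "Dc_path V E k c xs \<longleftrightarrow> xs \<noteq> [] \<and> distinct xs \<and> set xs \<subseteq> V
     \<and> successively (Dc_arc E k c) xs"

definition height :: "'a set \<Rightarrow> ('a \<Rightarrow> 'a \<Rightarrow> bool) \<Rightarrow> nat \<Rightarrow> ('a \<Rightarrow> nat) \<Rightarrow> nat" where
  "height V E k c = Max {length xs | xs. Dc_path V E k c xs}"

end

theory Submission
  imports Defs
begin

lemma succ_hd_reach:
  "successively R xs \<Longrightarrow> y \<in> set xs \<Longrightarrow> R\<^sup>*\<^sup>* (hd xs) y"
proof (induction xs)
  case Nil then show ?case by simp
next
  case (Cons x xs)
  show ?case
  proof (cases "y = x")
    case True then show ?thesis by simp
  next
    case False
    then have "y \<in> set xs" using Cons by simp
    then have ne: "xs \<noteq> []" by auto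
    have "successively R xs" "R x (hd xs)" using Cons.prems(1) ne by (auto simp: successively_Cons)
    with Cons.IH \<open>y \<in> set xs\<close> have "R\<^sup>*\<^sup>* (hd xs) y" by simp
    then show ?thesis using \<open>R x (hd xs)\<close> by (simp add: converse_rtranclp_into_rtranclp)
  qed
qed

lemma succ_last_reach:
  "successively R xs \<Longrightarrow> y \<in> set xs \<Longrightarrow> R\<^sup>*\<^sup>* y (last xs)"
proof (induction xs arbitrary: y)
  case Nil then show ?case by simp
next
  case (Cons x xs)
  show ?case
  proof (cases "xs = []")
    case True then show ?thesis using Cons by simp
  next
    case ne: False
    have s: "successively R xs" "R x (hd xs)" using Cons.prems(1) ne by (auto simp: successively_Cons)
    have l: "last (x # xs) = last xs" using ne by simp
    show ?thesis
    proof (cases "y = x")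
      case True
      have "R\<^sup>*\<^sup>* (hd xs) (last xs)" using Cons.IH[of "hd xs"] s ne by simp
      then show ?thesis using s True l by (simp add: converse_rtranclp_into_rtranclp)
    next
      case False
      then show ?thesis using Cons s l by simp
    qed
  qed
qed

lemma succ_color:
  assumes "successively (Dc_arc E k c) xs" "xs \<noteq> []"
  shows "c (last xs) mod k = (c (hd xs) + (length xs - 1)) mod k"
  using assms
proof (induction xs)
  case Nil then show ?case by simp
next
  case (Cons x xs)
  show ?case
  proof (cases "xs = []")
    case True then show ?thesis by simp
  next
    case ne: False
    have s: "successively (Dc_arc E k c) xs" "Dc_arc E k c x (hd xs)"
      using Cons.prems(1) ne by (auto simp: successively_Cons)
    have ih: "c (last xs) mod k = (c (hd xs) + (length xs - 1)) mod k" using Cons.IH s ne by simp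
    have a: "c (hd xs) mod k = (c x + 1) mod k" using s(2) by (simp add: Dc_arc_def)
    have "(c (hd xs) + (length xs - 1)) mod k = (c (hd xs) mod k + (length xs - 1)) mod k"
      by (simp add: mod_add_left_eq)
    also have "\<dots> = ((c x + 1) mod k + (length xs - 1)) mod k" using a by simp
    also have "\<dots> = (c x + 1 + (length xs - 1)) mod k" by (simp add: mod_add_left_eq)
    also have "\<dots> = (c x + (length (x#xs) - 1)) mod k"
    proof -
      have "length xs \<ge> 1" using ne by (cases xs) auto
      then have "c x + 1 + (length xs - 1) = c x + (length (x#xs) - 1)" by simp
      then show ?thesis by (simp only:)
    qed
    finally show ?thesis using ih ne by simp
  qed
qed

lemma paths_finite:
  assumes "graph V E"
  shows "finite {xs. Dc_path V E k c xs}"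
proof -
  have fV: "finite V" using assms by (simp add: graph_def)
  have "{xs. Dc_path V E k c xs} \<subseteq> {xs. set xs \<subseteq> V \<and> length xs \<le> card V}"
  proof
    fix xs assume "xs \<in> {xs. Dc_path V E k c xs}"
    then have "distinct xs" "set xs \<subseteq> V" by (auto simp: Dc_path_def)
    then have "length xs \<le> card V" using fV by (metis card_mono distinct_card)
    then show "xs \<in> {xs. set xs \<subseteq> V \<and> length xs \<le> card V}" using \<open>set xs \<subseteq> V\<close> by simp
  qed
  then show ?thesis using finite_lists_length_le[OF fV] by (rule finite_subset)
qed

definition PL where
  "PL V E k c v = Max {length xs | xs. Dc_path V E k c xs \<and> hd xs = v}"

lemma PL_props:
  assumes "graph V E" "v \<in> V"
  shows "\<exists>xs. Dc_path V E k c xs \<and> hd xs = v \<and> length xs = PL V E k c v"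
    and "\<And>xs. Dc_path V E k c xs \<Longrightarrow> hd xs = v \<Longrightarrow> length xs \<le> PL V E k c v"
    and "PL V E k c v \<le> height V E k c"
proof -
  let ?S = "{length xs | xs. Dc_path V E k c xs \<and> hd xs = v}"
  have f: "finite ?S" using paths_finite[OF assms(1), of k c] by (simp add: setcompr_eq_image)
  have p1: "Dc_path V E k c [v]" using assms by (simp add: Dc_path_def)
  then have ne: "?S \<noteq> {}" by force
  show "\<exists>xs. Dc_path V E k c xs \<and> hd xs = v \<and> length xs = PL V E k c v"
    using Max_in[OF f ne] unfolding PL_def by auto
  show "\<And>xs. Dc_path V E k c xs \<Longrightarrow> hd xs = v \<Longrightarrow> length xs \<le> PL V E k c v"
    unfolding PL_def using f by (auto intro!: Max_ge)
  have f2: "finite {length xs | xs. Dc_path V E k c xs}"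
    using paths_finite[OF assms(1), of k c] by (simp add: setcompr_eq_image)
  show "PL V E k c v \<le> height V E k c"
    unfolding PL_def height_def using f ne f2 by (intro Max_mono) auto
qed

lemma a1: "(a + (L::nat)) mod k = (b + L) mod k \<Longrightarrow> a mod k = b mod k"
  by (simp add: nat_mod_eq_iff)
lemma a3: assumes "(a + (L + (k - 1))) mod k = (b + L) mod k" "(k::nat) \<ge> 1" shows "a mod k = (b + 1) mod k"
proof -
  have "((a + (L + (k - 1))) mod k + 1) mod k = ((b + L) mod k + 1) mod k" using assms by simp
  then have "(a + (L + (k - 1)) + 1) mod k = (b + L + 1) mod k" by (simp only: mod_add_left_eq)
  moreover have "a + (L + (k - 1)) + 1 = (a + L) + k" using assms(2) by simp
  ultimately have "((a + L) + k) mod k = ((b + 1) + L) mod k" by (simp only: add_ac)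
  then have "(a + L) mod k = ((b + 1) + L) mod k" by simp
  then show ?thesis by (rule a1)
qed
lemma a2: "(a::nat) \<in> {1..k} \<Longrightarrow> b \<in> {1..k} \<Longrightarrow> a mod k = b mod k \<Longrightarrow> a = b"
  by (metis atLeastAtMost_iff less_one linorder_not_less mod_less mod_self
    not_less_iff_gr_or_eq)
lemma key:
  fixes k ca cb La Lb :: nat
  assumes "k \<ge> 2" "ca \<in> {1..k}" "cb \<in> {1..k}" "ca \<noteq> cb" "La < 2*k-2"
    "(ca+La) mod k = (cb+Lb) mod k" "La mod (k-1) = Lb mod (k-1)" "Lb \<le> La"
    "ca mod k = (cb+1) mod k \<Longrightarrow> Lb \<ge> La+1"
  shows False
proof -
  have "(k-1) dvd (La - Lb)" using assms(7,8) by (simp add: mod_eq_dvd_iff_nat)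
  then obtain q where q: "La - Lb = (k-1)*q" by blast
  have "q < 2"
  proof (rule ccontr)
    assume "\<not> q < 2"
    then have "(k-1)*2 \<le> (k-1)*q" by simp
    then show False using q assms(5) by linarith
  qed
  then have "q = 0 \<or> q = 1" by linarith
  then show False
  proof
    assume "q = 0"
    then have "La = Lb" using q assms(8) by simp
    then have "ca mod k = cb mod k" using assms(6) by (metis a1)
    then show False using a2 assms(2,3,4) by blast
  next
    assume "q = 1"
    then have "La = Lb + (k-1)" using q assms(8) by simp
    then have "(ca + (Lb + (k-1))) mod k = (cb + Lb) mod k" using assms(6) by simp
    then have "ca mod k = (cb + 1) mod k" by (rule a3) (use assms(1) in linarith)
    then show False using assms(9) \<open>La = Lb + (k-1)\<close> assms(1) by simp
  qed
qed

theorem lemma6: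
  fixes V :: "'a set" and E :: "'a \<Rightarrow> 'a \<Rightarrow> bool" and c :: "'a \<Rightarrow> nat" and \<chi> :: nat
  assumes "graph V E" and "connected_graph V E"
    and "\<chi> = chromatic_number V E"
    and "nice_coloring V E \<chi> c"
  shows "height V E \<chi> c \<ge> 2 * \<chi> - 1"
proof -
  have G: "graph V E" by fact
  have Ein: "\<And>a b. E a b \<Longrightarrow> a \<in> V \<and> b \<in> V" using G by (simp add: graph_def)
  have pc: "proper_coloring V E \<chi> c" and ac: "Dc_acyclic E \<chi> c"
    and sk: "card (Dc_sinks V E \<chi> c) = 1" using assms(4) by (auto simp: nice_coloring_def)
  obtain s where S: "Dc_sinks V E \<chi> c = {s}" using sk card_1_singletonE by blast
  have "V \<noteq> {}" using assms(2) by (simp add: connected_graph_def)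
  then obtain v0 where v0: "v0 \<in> V" by blast
  have h1: "1 \<le> height V E \<chi> c"
  proof -
    have "Dc_path V E \<chi> c [v0]" using v0 by (simp add: Dc_path_def)
    then have "length [v0] \<le> PL V E \<chi> c v0" using PL_props(2)[OF G v0, of \<chi> c "[v0]"] by simp
    then show ?thesis using PL_props(3)[OF G v0, of \<chi> c] by simp
  qed
  show ?thesis
  proof (cases "\<chi> \<le> 1")
    case True then show ?thesis using h1 by linarith
  next
    case False
    then have k2: "\<chi> \<ge> 2" by simp
    show ?thesis
    proof (rule ccontr)
      assume "\<not> ?thesis"
      then have hlt: "height V E \<chi> c < 2 * \<chi> - 1" by simp
      define L where "L v = PL V E \<chi> c v - 1" for v
      have PLpos: "PL V E \<chi> c v \<ge> 1" if "v \<in> V" for v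
      proof -
        have "Dc_path V E \<chi> c [v]" using that by (simp add: Dc_path_def)
        then have "length [v] \<le> PL V E \<chi> c v" using PL_props(2)[OF G that, of \<chi> c "[v]"] by simp
        then show ?thesis by simp
      qed
      have Lbound: "L v < 2 * \<chi> - 2" if "v \<in> V" for v
        using PL_props(3)[OF G that, of \<chi> c] hlt PLpos[OF that] unfolding L_def by linarith
      have Lsink: "(c v + L v) mod \<chi> = c s mod \<chi>" if vV: "v \<in> V" for v
      proof -
        obtain xs where xs: "Dc_path V E \<chi> c xs" "hd xs = v" "length xs = PL V E \<chi> c v"
          using PL_props(1)[OF G vV] by blast
        have ne: "xs \<noteq> []" and sx: "successively (Dc_arc E \<chi> c) xs" and dx: "distinct xs"
          and setx: "set xs \<subseteq> V" using xs(1) by (auto simp: Dc_path_def)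
        have wV: "last xs \<in> V" using ne setx by auto
        have "last xs \<in> Dc_sinks V E \<chi> c"
        proof (rule ccontr)
          assume "last xs \<notin> Dc_sinks V E \<chi> c"
          then obtain x where ax: "Dc_arc E \<chi> c (last xs) x" using wV by (auto simp: Dc_sinks_def)
          then have xV: "x \<in> V" using Ein by (auto simp: Dc_arc_def)
          show False
          proof (cases "x \<in> set xs")
            case True
            have "(Dc_arc E \<chi> c)\<^sup>*\<^sup>* x (last xs)" using succ_last_reach[OF sx True] .
            then have "(Dc_arc E \<chi> c)\<^sup>+\<^sup>+ (last xs) (last xs)" using ax
              by (simp add: rtranclp_into_tranclp2)
            then show False using ac by (simp add: Dc_acyclic_def)
          next
            case False
            have "Dc_path V E \<chi> c (xs @ [x])" using xs(1) False xV ax ne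
              by (auto simp: Dc_path_def successively_append_iff)
            moreover have "hd (xs @ [x]) = v" using ne xs(2) by simp
            ultimately have "length (xs @ [x]) \<le> PL V E \<chi> c v" using PL_props(2)[OF G vV] by blast
            then show False using xs(3) by simp
          qed
        qed
        then have "last xs = s" using S by simp
        then show ?thesis using succ_color[OF sx ne] xs unfolding L_def by simp
      qed
      have Larc: "L a \<ge> L b + 1" if ab: "Dc_arc E \<chi> c a b" for a b
      proof -
        have aV: "a \<in> V" and bV: "b \<in> V" using ab Ein by (auto simp: Dc_arc_def)
        obtain xs where xs: "Dc_path V E \<chi> c xs" "hd xs = b" "length xs = PL V E \<chi> c b"
          using PL_props(1)[OF G bV] by blast
        have ne: "xs \<noteq> []" and sx: "successively (Dc_arc E \<chi> c) xs"
          using xs(1) by (auto simp: Dc_path_def)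
        show ?thesis
        proof (cases "a \<in> set xs")
          case True
          have "(Dc_arc E \<chi> c)\<^sup>*\<^sup>* b a" using succ_hd_reach[OF sx True] xs(2) by simp
          then have "(Dc_arc E \<chi> c)\<^sup>+\<^sup>+ a a" using ab
            by (simp add: rtranclp_into_tranclp2)
          then show ?thesis using ac by (simp add: Dc_acyclic_def)
        next
          case False
          have "Dc_path V E \<chi> c (a # xs)" using xs False aV ab ne
            by (auto simp: Dc_path_def successively_Cons)
          then have "length (a # xs) \<le> PL V E \<chi> c a" using PL_props(2)[OF G aV, of \<chi> c "a # xs"] by simp
          then show ?thesis using xs(3) PLpos[OF bV] unfolding L_def by simp
        qed
      qed
      define f where "f v = L v mod (\<chi> - 1) + 1" for v
      have "proper_coloring V E (\<chi> - 1) f"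
        unfolding proper_coloring_def
      proof (intro conjI allI impI ballI)
        fix v assume "v \<in> V"
        have "L v mod (\<chi> - 1) < \<chi> - 1" using k2 by simp
        then show "f v \<in> {1..\<chi> - 1}" unfolding f_def by simp
      next
        fix a b assume ab: "E a b"
        have aV: "a \<in> V" and bV: "b \<in> V" using ab Ein by auto
        have cab: "c a \<noteq> c b" using pc ab by (simp add: proper_coloring_def)
        have ca: "c a \<in> {1..\<chi>}" and cb: "c b \<in> {1..\<chi>}" using pc aV bV
          by (auto simp: proper_coloring_def)
        have eq: "(c a + L a) mod \<chi> = (c b + L b) mod \<chi>" using Lsink aV bV by simp
        show "f a \<noteq> f b"
        proof
          assume "f a = f b"
          then have m: "L a mod (\<chi> - 1) = L b mod (\<chi> - 1)" unfolding f_def by simp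
          show False
          proof (cases "L b \<le> L a")
            case True
            show False
            proof (rule key[OF k2 ca cb cab Lbound[OF aV] eq m True])
              assume "c a mod \<chi> = (c b + 1) mod \<chi>"
              then have "Dc_arc E \<chi> c b a" using ab G by (simp add: Dc_arc_def graph_def)
              then show "L b \<ge> L a + 1" by (rule Larc)
            qed
          next
            case False
            show False
            proof (rule key[OF k2 cb ca cab[symmetric] Lbound[OF bV] eq[symmetric] m[symmetric]])
              show "L a \<le> L b" using False by simp
            next
              assume "c b mod \<chi> = (c a + 1) mod \<chi>"
              then have "Dc_arc E \<chi> c a b" using ab by (simp add: Dc_arc_def)
              then show "L a \<ge> L b + 1" by (rule Larc)
            qed
          qed
        qed
      qed
      then have "chromatic_number V E \<le> \<chi> - 1" unfolding chromatic_number_def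
        by (rule Least_le[where P="\<lambda>k. \<exists>c. proper_coloring V E k c", OF exI])
      then show False using assms(3) k2 by simp
    qed
  qed
qed

end
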